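(* Let $t,t':V\to\mathbb{R}_{\ge0}$ be fingerprints with $t_v\le t'_v$ for all $v\in V$. Then at every time $\tau\ge0$: (i) every active component in shadow moat growing on $(G,t)$ is contained in some active component of shadow moat growing on $(G,t')$ at the same time $\tau$; and (ii) every component (active or not) of the run on $(G,t)$ at time $\tau$ is contained in some component of the run on $(G,t')$ at time $\tau$.
   Context: $G=(V,E,c)$ is an undirected graph with edge costs $c:E\to\mathbb{R}_{\ge0}$; $\delta(S)$ denotes the edges with exactly one endpoint in $S$. Shadow moat growing on $(G,t)$, for a fingerprint $t:V\to\mathbb{R}_{\ge0}$: a continuous process in time $\tau\ge0$ maintaining a forest $F$ (initially empty), the components of $(V,F)$, and values $y_S\ge0$ ($S\subseteq V$, initially $0$). At time $\tau$ a component $C$ is active iff it contains $w$ with $t_w>\tau$; each active component $C$ increases $y_C$ at rate $1$. When an edge $e$ between different components satisfies $\sum_{S:e\in\delta(S)}y_S=c_e$ it is added to $F$ and the components merge (ties processed one at a time by a fixed rule). The process stops when no component is active; the components and active components "at time $\tau$" are those after all merges and deactivations occurring at time $\tau$. *)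

theory Defs
  imports "HOL-Analysis.Analysis"
begin

text \<open>A run of shadow moat growing is described by the family P of its components:
P tau is the set of components (after all merges at time tau).\<close>

definition wf_graph :: "'v set \<Rightarrow> 'v set set \<Rightarrow> ('v set \<Rightarrow> real) \<Rightarrow> bool" where
  "wf_graph V E c \<longleftrightarrow> finite V \<and> (\<forall>e\<in>E. e \<subseteq> V \<and> card e = 2 \<and> c e \<ge> 0)"

definition cuts :: "'v set \<Rightarrow> 'v set \<Rightarrow> bool" where
  "cuts S e \<longleftrightarrow> card (e \<inter> S) = 1"

definition active_at :: "('v \<Rightarrow> real) \<Rightarrow> real \<Rightarrow> 'v set \<Rightarrow> bool" where
  "active_at t \<tau> C \<longleftrightarrow> (\<exists>w\<in>C. t w > \<tau>)"

definition yval :: "(real \<Rightarrow> 'v set set) \<Rightarrow> ('v \<Rightarrow> real) \<Rightarrow> 'v set \<Rightarrow> real \<Rightarrow> real" where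
  "yval P t S \<tau> = integral {0..\<tau>} (\<lambda>s. if S \<in> P s \<and> active_at t s S then 1 else 0)"

definition load :: "'v set \<Rightarrow> (real \<Rightarrow> 'v set set) \<Rightarrow> ('v \<Rightarrow> real) \<Rightarrow> 'v set \<Rightarrow> real \<Rightarrow> real" where
  "load V P t e \<tau> = (\<Sum>S | S \<subseteq> V \<and> cuts S e. yval P t S \<tau>)"

definition components :: "'v set \<Rightarrow> 'v set set \<Rightarrow> 'v set set" where
  "components V F = {{w \<in> V. (v, w) \<in> {(a, b). {a, b} \<in> F}\<^sup>*} | v. v \<in> V}"

text \<open>P is the (component trajectory of the) run of shadow moat growing on (G,t):
at every time tau >= 0 the components are exactly the connected components of the graph of
tight edges (the forest F consists of tight edges, and every tight edge lies inside a
component); components only coarsen over time.\<close>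
definition shadow_run ::
  "'v set \<Rightarrow> 'v set set \<Rightarrow> ('v set \<Rightarrow> real) \<Rightarrow> ('v \<Rightarrow> real) \<Rightarrow> (real \<Rightarrow> 'v set set) \<Rightarrow> bool" where
  "shadow_run V E c t P \<longleftrightarrow>
     (\<forall>\<tau>\<ge>0. P \<tau> = components V {e \<in> E. load V P t e \<tau> \<ge> c e}) \<and>
     (\<forall>s \<tau>. 0 \<le> s \<and> s \<le> \<tau> \<longrightarrow> (\<forall>C\<in>P s. \<exists>D\<in>P \<tau>. C \<subseteq> D))"

end

theory Submission
  imports Defs
begin


lemma sym_rel: "sym {(a, b). {a, b} \<in> F}"
  by (auto simp: sym_def insert_commute)

lemma rt_sym: "(a, b) \<in> {(a, b). {a, b} \<in> F}\<^sup>* \<Longrightarrow> (b, a) \<in> {(a, b). {a, b} \<in> F}\<^sup>*"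
  using sym_rel[of F] sym_rtrancl by (metis symD)

lemma comp_subset: "C \<in> components V F \<Longrightarrow> C \<subseteq> V"
  unfolding components_def by auto

lemma comp_nonempty: "C \<in> components V F \<Longrightarrow> C \<noteq> {}"
  unfolding components_def by auto

lemma comp_of: "v \<in> V \<Longrightarrow> {w \<in> V. (v, w) \<in> {(a, b). {a, b} \<in> F}\<^sup>*} \<in> components V F"
  unfolding components_def by auto

lemma comp_disj: assumes "C \<in> components V F" "D \<in> components V F" "x \<in> C" "x \<in> D"
  shows "C = D"
proof -
  let ?R = "{(a, b). {a, b} \<in> F}"
  obtain v where v: "C = {w \<in> V. (v, w) \<in> ?R\<^sup>*}" using assms(1) unfolding components_def by auto
  obtain u where u: "D = {w \<in> V. (u, w) \<in> ?R\<^sup>*}" using assms(2) unfolding components_def by auto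
  have 1: "(v, x) \<in> ?R\<^sup>*" "(u, x) \<in> ?R\<^sup>*" using assms v u by auto
  have "(v, u) \<in> ?R\<^sup>*" "(u, v) \<in> ?R\<^sup>*" using 1 rt_sym[of u x F] rt_sym[of v x F]
    by (meson rtrancl_trans)+
  then show ?thesis unfolding u v by (auto intro: rtrancl_trans)
qed

lemma comp_same: assumes "C \<in> components V F" "a \<in> C" "b \<in> C"
  shows "(a, b) \<in> {(a, b). {a, b} \<in> F}\<^sup>*"
proof -
  let ?R = "{(a, b). {a, b} \<in> F}"
  obtain v where v: "C = {w \<in> V. (v, w) \<in> ?R\<^sup>*}" using assms(1) unfolding components_def by auto
  then have "(v, a) \<in> ?R\<^sup>*" "(v, b) \<in> ?R\<^sup>*" using assms by auto
  then show ?thesis using rt_sym[of v a F] by (meson rtrancl_trans)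
qed

lemma cuts_pair: "a \<noteq> b \<Longrightarrow> cuts X {a, b} \<longleftrightarrow> (a \<in> X \<longleftrightarrow> b \<notin> X)"
  unfolding cuts_def by (cases "a \<in> X"; cases "b \<in> X") auto

lemma run_eq:
  assumes "shadow_run V E c t P" "0 \<le> s"
  shows "P s = components V {e \<in> E. load V P t e s \<ge> c e}"
proof -
  have "\<forall>\<tau>. 0 \<le> \<tau> \<longrightarrow> P \<tau> = components V {e \<in> E. load V P t e \<tau> \<ge> c e}"
    using assms(1) unfolding shadow_run_def by (rule conjunct1)
  then have "0 \<le> s \<longrightarrow> P s = components V {e \<in> E. load V P t e s \<ge> c e}" by (rule spec)
  from this assms(2) show ?thesis by (rule mp)
qed

lemma run_comp: "shadow_run V E c t P \<Longrightarrow> 0 \<le> s \<Longrightarrow> \<exists>F. P s = components V F"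
  by (drule run_eq, assumption, rule exI)

lemma run_mono:
  assumes "shadow_run V E c t P" "0 \<le> s" "s \<le> u" "C \<in> P s"
  shows "\<exists>D\<in>P u. C \<subseteq> D"
proof -
  have "\<forall>s \<tau>. 0 \<le> s \<and> s \<le> \<tau> \<longrightarrow> (\<forall>C\<in>P s. \<exists>D\<in>P \<tau>. C \<subseteq> D)"
    using assms(1) unfolding shadow_run_def by (rule conjunct2)
  then have "\<forall>C\<in>P s. \<exists>D\<in>P u. C \<subseteq> D" using assms(2,3) by blast
  then show ?thesis using assms(4) by blast
qed

lemma ind_integrable:
  assumes run: "shadow_run V E c t P" and a: "0 \<le> a"
  shows "(\<lambda>s. if S \<in> P s \<and> active_at t s S then 1 else 0 :: real) integrable_on {a..b}"
proof -
  define A where "A = {s \<in> {a..b}. S \<in> P s \<and> active_at t s S}"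
  have "is_interval A"
    unfolding is_interval_1
  proof (intro ballI allI impI)
    fix x z y assume x: "x \<in> A" and z: "z \<in> A" and y: "x \<le> y \<and> y \<le> z"
    have x0: "0 \<le> x" using x a unfolding A_def by auto
    obtain D where D: "D \<in> P y" "S \<subseteq> D" using run_mono[OF run x0, of y S] x y unfolding A_def by auto
    obtain D' where D': "D' \<in> P z" "D \<subseteq> D'" using run_mono[OF run, of y z D] x0 y D by auto
    obtain F where F: "P z = components V F" using run_comp[OF run, of z] x0 y by auto
    have Sz: "S \<in> P z" using z unfolding A_def by auto
    obtain u where "u \<in> S" using comp_nonempty[of S V F] Sz F by auto
    then have "S = D'" using comp_disj[of S V F D' u] Sz D' D F by auto
    then have "D = S" using D D' by auto
    moreover have "active_at t y S" using z y unfolding A_def active_at_def by force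
    ultimately show "y \<in> A" using x z y D(1) unfolding A_def by auto
  qed
  then have "A \<in> lmeasurable"
    by (intro measurable_convex) (auto simp: is_interval_convex_1 A_def intro: bounded_subset[of "{a..b}"])
  then have "indicat_real A integrable_on {a..b}"
    using integrable_on_indicator[of A "{a..b}"] by (simp add: A_def Int_absorb2 subset_iff)
  then show ?thesis
    by (rule integrable_eq) (auto simp: A_def indicator_def)
qed


lemma finite_Q: "finite V \<Longrightarrow> finite {S. S \<subseteq> V \<and> cuts S e}"
  by (rule finite_subset[of _ "Pow V"]) auto

lemma yval_step:
  assumes run: "shadow_run V E c t P" and "0 \<le> \<sigma>" "\<sigma> \<le> y"
  shows "yval P t S \<sigma> \<le> yval P t S y \<and> yval P t S y \<le> yval P t S \<sigma> + (y - \<sigma>)"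
proof -
  let ?f = "\<lambda>s. if S \<in> P s \<and> active_at t s S then 1 else 0 :: real"
  have i: "?f integrable_on {0..y}" using ind_integrable[OF run] by simp
  have i2: "?f integrable_on {\<sigma>..y}" using ind_integrable[OF run, of \<sigma>] assms by simp
  have c: "integral {0..\<sigma>} ?f + integral {\<sigma>..y} ?f = integral {0..y} ?f"
    using Henstock_Kurzweil_Integration.integral_combine[OF assms(2,3) i] .
  have "0 \<le> integral {\<sigma>..y} ?f" by (rule integral_nonneg[OF i2]) auto
  moreover have "integral {\<sigma>..y} ?f \<le> integral {\<sigma>..y} (\<lambda>_. 1::real)"
    by (rule integral_le[OF i2]) auto
  moreover have "integral {\<sigma>..y} (\<lambda>_. 1::real) = y - \<sigma>" using assms by simp
  ultimately show ?thesis using c unfolding yval_def by linarith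
qed

lemma load_step:
  assumes wf: "wf_graph V E c" and run: "shadow_run V E c t P" and "0 \<le> \<sigma>" "\<sigma> \<le> y"
  shows "load V P t e \<sigma> \<le> load V P t e y \<and>
    load V P t e y \<le> load V P t e \<sigma> + real (card {S. S \<subseteq> V \<and> cuts S e}) * (y - \<sigma>)"
proof -
  let ?Q = "{S. S \<subseteq> V \<and> cuts S e}"
  have "load V P t e \<sigma> \<le> load V P t e y" unfolding load_def
    by (rule sum_mono) (use yval_step[OF run assms(3,4)] in auto)
  moreover have "load V P t e y \<le> (\<Sum>S\<in>?Q. yval P t S \<sigma> + (y - \<sigma>))" unfolding load_def
    by (rule sum_mono) (use yval_step[OF run assms(3,4)] in auto)
  moreover have "(\<Sum>S\<in>?Q. yval P t S \<sigma> + (y - \<sigma>)) = load V P t e \<sigma> + real (card ?Q) * (y - \<sigma>)"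
    unfolding load_def by (simp add: sum.distrib)
  ultimately show ?thesis by linarith
qed

lemma right_const:
  assumes wf: "wf_graph V E c" and run: "shadow_run V E c t P" and s0: "0 \<le> \<sigma>"
  shows "\<exists>b>\<sigma>. \<forall>y>\<sigma>. y < b \<longrightarrow> P y = P \<sigma>"
proof -
  have finV: "finite V" using wf unfolding wf_graph_def by auto
  have finE: "finite E" using wf finV unfolding wf_graph_def
    by (intro finite_subset[of E "Pow V"]) auto
  have "\<forall>\<^sub>F y in at_right \<sigma>. \<forall>e\<in>E. c e \<le> load V P t e y \<longrightarrow> c e \<le> load V P t e \<sigma>"
  proof (rule eventually_ball_finite[OF finE], rule ballI)
    fix e assume "e \<in> E"
    show "\<forall>\<^sub>F y in at_right \<sigma>. c e \<le> load V P t e y \<longrightarrow> c e \<le> load V P t e \<sigma>"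
    proof (cases "c e \<le> load V P t e \<sigma>")
      case True then show ?thesis by simp
    next
      case False
      define K where "K = real (card {S. S \<subseteq> V \<and> cuts S e})"
      define d where "d = c e - load V P t e \<sigma>"
      have d: "d > 0" using False d_def by simp
      have K: "K \<ge> 0" unfolding K_def by simp
      show ?thesis unfolding eventually_at_right_field
      proof (intro exI[of _ "\<sigma> + d / (K + 1)"] conjI allI impI)
        show "\<sigma> < \<sigma> + d / (K + 1)" using d K by simp
        fix y assume y: "\<sigma> < y" "y < \<sigma> + d / (K + 1)" "c e \<le> load V P t e y"
        have l: "load V P t e y \<le> load V P t e \<sigma> + K * (y - \<sigma>)"
          using load_step[OF wf run s0, of y e] y unfolding K_def by simp
        have "K * (y - \<sigma>) \<le> (K + 1) * (y - \<sigma>)" using y by (simp add: algebra_simps)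
        moreover have "(K + 1) * (y - \<sigma>) < d" using y K
          by (simp add: field_simps)
        ultimately show "c e \<le> load V P t e \<sigma>" using l y d_def by linarith
      qed
    qed
  qed
  then obtain b where b: "b > \<sigma>" "\<And>y. \<sigma> < y \<Longrightarrow> y < b \<Longrightarrow>
      \<forall>e\<in>E. c e \<le> load V P t e y \<longrightarrow> c e \<le> load V P t e \<sigma>"
    unfolding eventually_at_right_field by blast
  show ?thesis
  proof (intro exI[of _ b] conjI allI impI)
    show "b > \<sigma>" by fact
    fix y assume y: "\<sigma> < y" "y < b"
    have "{e \<in> E. c e \<le> load V P t e y} = {e \<in> E. c e \<le> load V P t e \<sigma>}"
    proof -
      have m: "\<And>e. load V P t e \<sigma> \<le> load V P t e y"
        using load_step[OF wf run s0, of y] y by simp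
      show ?thesis using b(2)[OF y] m by (auto intro: order_trans)
    qed
    then show "P y = P \<sigma>" using run_eq[OF run s0] run_eq[OF run, of y] s0 y by simp
  qed
qed


lemma sum_ind_card:
  assumes "finite Q"
  shows "(\<Sum>S\<in>Q. if S \<in> P s \<and> active_at t s S then 1 else 0 :: real)
       = real (card {S \<in> Q. S \<in> P s \<and> active_at t s S})"
  using sum.inter_filter[OF assms, of "\<lambda>_. 1::real" "\<lambda>S. S \<in> P s \<and> active_at t s S", symmetric]
  by simp

lemma step:
  assumes wf: "wf_graph V E c" and tt: "\<forall>v\<in>V. t v \<le> t' v"
    and run: "shadow_run V E c t P" and run': "shadow_run V E c t' P'"
    and t0: "0 \<le> \<tau>"
    and before: "\<forall>s. 0 \<le> s \<and> s < \<tau> \<longrightarrow> (\<forall>C\<in>P s. \<exists>D\<in>P' s. C \<subseteq> D)"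
  shows "\<forall>C\<in>P \<tau>. \<exists>D\<in>P' \<tau>. C \<subseteq> D"
proof -
  have finV: "finite V" using wf unfolding wf_graph_def by auto
  define F where "F = {e \<in> E. load V P t e \<tau> \<ge> c e}"
  define F' where "F' = {e \<in> E. load V P' t' e \<tau> \<ge> c e}"
  have PF: "P \<tau> = components V F" unfolding F_def by (rule run_eq[OF run t0])
  have PF': "P' \<tau> = components V F'" unfolding F'_def by (rule run_eq[OF run' t0])
  let ?R = "{(a, b). {a, b} \<in> F}"
  let ?R' = "{(a, b). {a, b} \<in> F'}"
  have claim: "(a, b) \<in> ?R'\<^sup>*" if ab: "{a, b} \<in> F" for a b
  proof (rule ccontr)
    assume nab: "(a, b) \<notin> ?R'\<^sup>*"
    define e where "e = {a, b}"
    have eE: "e \<in> E" and tight: "c e \<le> load V P t e \<tau>" using ab unfolding F_def e_def by auto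
    have "card e = 2" "e \<subseteq> V" using wf eE unfolding wf_graph_def by auto
    then have aneb: "a \<noteq> b" and aV: "a \<in> V" and bV: "b \<in> V" unfolding e_def by auto
    have sep: "\<not> (a \<in> D \<and> b \<in> D)" if hs: "0 \<le> s" "s \<le> \<tau>" "D \<in> P' s" for s D
    proof
      assume "a \<in> D \<and> b \<in> D"
      obtain D' where "D' \<in> P' \<tau>" "D \<subseteq> D'" using run_mono[OF run' hs] by blast
      then show False using comp_same[of D' V F' a b] PF' nab \<open>a \<in> D \<and> b \<in> D\<close> by auto
    qed
    let ?Q = "{S. S \<subseteq> V \<and> cuts S e}"
    have finQ: "finite ?Q" using finite_Q[OF finV] .
    let ?g = "\<lambda>P t s. \<Sum>S\<in>?Q. if S \<in> P s \<and> active_at t s S then 1 else 0 :: real"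
    let ?h = "\<lambda>P t s. if s = \<tau> then 0 else ?g P t s"
    have gi: "?g P t integrable_on {0..\<tau>}"
      by (rule integrable_sum[OF finQ]) (rule ind_integrable[OF run], simp)
    have gi': "?g P' t' integrable_on {0..\<tau>}"
      by (rule integrable_sum[OF finQ]) (rule ind_integrable[OF run'], simp)
    have hi: "?h P t integrable_on {0..\<tau>}"
      by (rule integrable_spike[OF gi, of "{\<tau>}"]) auto
    have hi': "?h P' t' integrable_on {0..\<tau>}"
      by (rule integrable_spike[OF gi', of "{\<tau>}"]) auto
    have L: "load V P t e \<tau> = integral {0..\<tau>} (?g P t)"
      unfolding load_def yval_def
      by (rule integral_sum[symmetric, OF finQ]) (rule ind_integrable[OF run], simp)
    have L': "load V P' t' e \<tau> = integral {0..\<tau>} (?g P' t')"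
      unfolding load_def yval_def
      by (rule integral_sum[symmetric, OF finQ]) (rule ind_integrable[OF run'], simp)
    have H: "integral {0..\<tau>} (?g P t) = integral {0..\<tau>} (?h P t)"
      by (rule integral_spike[of "{\<tau>}"]) auto
    have H': "integral {0..\<tau>} (?g P' t') = integral {0..\<tau>} (?h P' t')"
      by (rule integral_spike[of "{\<tau>}"]) auto
    have pw: "?g P t s \<le> ?g P' t' s" if s: "0 \<le> s" "s < \<tau>" for s
    proof -
      let ?A = "{S \<in> ?Q. S \<in> P s \<and> active_at t s S}"
      let ?B = "{S \<in> ?Q. S \<in> P' s \<and> active_at t' s S}"
      obtain G where G: "P s = components V G" using run_comp[OF run] s by blast
      obtain G' where G': "P' s = components V G'" using run_comp[OF run'] s by blast
      define f where "f = (\<lambda>S. SOME D. D \<in> P' s \<and> S \<subseteq> D)"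
      have fD: "f S \<in> P' s \<and> S \<subseteq> f S" if "S \<in> P s" for S
      proof -
        have "\<exists>D. D \<in> P' s \<and> S \<subseteq> D" using before s that by blast
        then show ?thesis unfolding f_def by (rule someI_ex)
      qed
      have cutsab: "cuts X e \<longleftrightarrow> (a \<in> X \<longleftrightarrow> b \<notin> X)" for X
        unfolding e_def using cuts_pair[OF aneb] .
      have sepS: "\<not> (a \<in> f S \<and> b \<in> f S)" if "S \<in> P s" for S
        using sep[of s "f S"] fD[OF that] s by auto
      have "card ?A \<le> card ?B"
      proof (rule card_inj_on_le[of f])
        show "f ` ?A \<subseteq> ?B"
        proof
          fix D assume "D \<in> f ` ?A"
          then obtain S where S: "S \<in> ?A" "D = f S" by blast
          have SP: "S \<in> P s" using S by auto
          have D: "D \<in> P' s" "S \<subseteq> D" using fD[OF SP] S by auto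
          have DV: "D \<subseteq> V" using D G' comp_subset by metis
          have "cuts D e" using S(1) D sepS[OF SP] unfolding cutsab S(2) by auto
          moreover have "active_at t' s D"
          proof -
            obtain w where "w \<in> S" "t w > s" using S unfolding active_at_def by auto
            moreover have "w \<in> V" using \<open>w \<in> S\<close> D DV by auto
            ultimately show ?thesis using tt D unfolding active_at_def by force
          qed
          ultimately show "D \<in> ?B" using D DV by auto
        qed
        show "inj_on f ?A"
        proof (rule inj_onI)
          fix S1 S2 assume S1: "S1 \<in> ?A" and S2: "S2 \<in> ?A" and eq: "f S1 = f S2"
          have P1: "S1 \<in> P s" and P2: "S2 \<in> P s" using S1 S2 by auto
          have c1: "a \<in> S1 \<longleftrightarrow> b \<notin> S1" and c2: "a \<in> S2 \<longleftrightarrow> b \<notin> S2"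
            using S1 S2 cutsab by auto
          have "\<exists>x. x \<in> S1 \<and> x \<in> S2"
            using c1 c2 fD[OF P1] fD[OF P2] sepS[OF P1] eq by blast
          then show "S1 = S2" using comp_disj[of S1 V G S2] P1 P2 G by auto
        qed
        show "finite ?B" using finQ by (rule finite_subset[rotated]) auto
      qed
      then show ?thesis using sum_ind_card[OF finQ] by simp
    qed
    have "integral {0..\<tau>} (?h P t) \<le> integral {0..\<tau>} (?h P' t')"
      by (rule integral_le[OF hi hi']) (use pw in auto)
    then have "load V P t e \<tau> \<le> load V P' t' e \<tau>" using L L' H H' by simp
    then have "e \<in> F'" using tight eE unfolding F'_def by auto
    then have "(a, b) \<in> ?R'" unfolding e_def by auto
    then show False using nab by auto
  qed
  show ?thesis
  proof
    fix C assume "C \<in> P \<tau>"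
    then obtain v where v: "v \<in> V" "C = {w \<in> V. (v, w) \<in> ?R\<^sup>*}"
      using PF unfolding components_def by auto
    have "?R \<subseteq> ?R'\<^sup>*" using claim by auto
    then have "?R\<^sup>* \<subseteq> ?R'\<^sup>*" by (metis rtrancl_subset_rtrancl rtrancl_idemp)
    then have "C \<subseteq> {w \<in> V. (v, w) \<in> ?R'\<^sup>*}" using v by auto
    moreover have "{w \<in> V. (v, w) \<in> ?R'\<^sup>*} \<in> P' \<tau>" using comp_of[OF v(1)] PF' by auto
    ultimately show "\<exists>D\<in>P' \<tau>. C \<subseteq> D" by blast
  qed
qed

theorem mainTheorem4:
  fixes V :: "'v set" and E :: "'v set set" and c :: "'v set \<Rightarrow> real"
    and t t' :: "'v \<Rightarrow> real" and P P' :: "real \<Rightarrow> 'v set set" and \<tau> :: real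
  assumes "wf_graph V E c"
    and "\<forall>v\<in>V. 0 \<le> t v" and "\<forall>v\<in>V. 0 \<le> t' v"
    and "\<forall>v\<in>V. t v \<le> t' v"
    and "shadow_run V E c t P" and "shadow_run V E c t' P'"
    and "0 \<le> \<tau>"
  shows "(\<forall>C\<in>P \<tau>. active_at t \<tau> C \<longrightarrow> (\<exists>D\<in>P' \<tau>. active_at t' \<tau> D \<and> C \<subseteq> D))
       \<and> (\<forall>C\<in>P \<tau>. \<exists>D\<in>P' \<tau>. C \<subseteq> D)"
proof -
  note wf = assms(1) and tt = assms(4) and run = assms(5) and run' = assms(6)
  define B where "B = {x. 0 \<le> x \<and> \<not> (\<forall>C\<in>P x. \<exists>D\<in>P' x. C \<subseteq> D)}"
  have ref: "B = {}"
  proof (rule ccontr)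
    assume Bne: "B \<noteq> {}"
    have bdd: "bdd_below B" unfolding B_def by (rule bdd_belowI[of _ 0]) auto
    define \<sigma> where "\<sigma> = Inf B"
    have s0: "0 \<le> \<sigma>" unfolding \<sigma>_def by (rule cInf_greatest[OF Bne]) (auto simp: B_def)
    have below: "\<forall>s. 0 \<le> s \<and> s < \<sigma> \<longrightarrow> (\<forall>C\<in>P s. \<exists>D\<in>P' s. C \<subseteq> D)"
    proof (intro allI impI)
      fix s assume s: "0 \<le> s \<and> s < \<sigma>"
      have "s \<notin> B" using cInf_lower[OF _ bdd, of s] s unfolding \<sigma>_def by force
      then show "\<forall>C\<in>P s. \<exists>D\<in>P' s. C \<subseteq> D" using s unfolding B_def by auto
    qed
    have refs: "\<forall>C\<in>P \<sigma>. \<exists>D\<in>P' \<sigma>. C \<subseteq> D" by (rule step[OF wf tt run run' s0 below])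
    obtain b where b: "b > \<sigma>" "\<And>y. \<sigma> < y \<Longrightarrow> y < b \<Longrightarrow> P y = P \<sigma>"
      using right_const[OF wf run s0] by blast
    have "b \<le> \<sigma>" unfolding \<sigma>_def
    proof (rule cInf_greatest[OF Bne])
      fix x assume xB: "x \<in> B"
      show "b \<le> x"
      proof (rule ccontr)
        assume "\<not> b \<le> x"
        then have xb: "x < b" by simp
        have x0: "0 \<le> x" using xB unfolding B_def by auto
        have "\<forall>C\<in>P x. \<exists>D\<in>P' x. C \<subseteq> D"
        proof (cases "x < \<sigma>")
          case True then show ?thesis using below x0 by blast
        next
          case False
          show ?thesis
          proof (cases "x = \<sigma>")
            case True then show ?thesis using refs by simp
          next
            case False
            then have xs: "\<sigma> < x" using \<open>\<not> x < \<sigma>\<close> by simp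
            show ?thesis
            proof
              fix C assume "C \<in> P x"
              then have "C \<in> P \<sigma>" using b(2)[OF xs xb] by simp
              then obtain D where D: "D \<in> P' \<sigma>" "C \<subseteq> D" using refs by blast
              obtain D' where "D' \<in> P' x" "D \<subseteq> D'" using run_mono[OF run' s0 _ D(1), of x] xs by auto
              then show "\<exists>D\<in>P' x. C \<subseteq> D" using D by blast
            qed
          qed
        qed
        then show False using xB unfolding B_def by auto
      qed
    qed
    then show False using b by simp
  qed
  have R: "\<forall>C\<in>P \<tau>. \<exists>D\<in>P' \<tau>. C \<subseteq> D" using ref assms(7) unfolding B_def by auto
  have A: "\<exists>D\<in>P' \<tau>. active_at t' \<tau> D \<and> C \<subseteq> D" if C: "C \<in> P \<tau>" "active_at t \<tau> C" for C
  proof -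
    obtain D where D: "D \<in> P' \<tau>" "C \<subseteq> D" using R C by blast
    obtain F where "P \<tau> = components V F" using run_comp[OF run assms(7)] by blast
    then have CV: "C \<subseteq> V" using C comp_subset by metis
    obtain w where "w \<in> C" "t w > \<tau>" using C unfolding active_at_def by auto
    then have "active_at t' \<tau> D" using CV D tt unfolding active_at_def by force
    then show ?thesis using D by blast
  qed
  show ?thesis using A R by blast
qed

end
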